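(* Let $n$ and $k$ be integers with $k\ge4$ and $n\ge3$. Then (i) $\chi_\rho(S^2_{P_k})\ge 4$, and (ii) $\chi_\rho(S^n_{P_k})\ge 5$.
   Context: $P_k$ is the path with vertex set $[k]=\{0,\dots,k-1\}$ and edges $\{i,i+1\}$, $0\le i\le k-2$. For a graph $G$ with vertex set $[k]$ and $n\ge 1$, the generalized Sierpi\'nski graph $S^n_G$ has vertex set $[k]^n$, and $u=u_1\cdots u_n$, $v=v_1\cdots v_n$ are adjacent iff there is $i$ with: $u_j=v_j$ for $j<i$; $u_i\neq v_i$ and $u_iv_i\in E(G)$; and $u_j=v_i$, $v_j=u_i$ for all $j>i$. A packing $c$-coloring of a graph $X$ is a map $f:V(X)\to\{1,\dots,c\}$ such that any two distinct vertices $u,v$ with $f(u)=f(v)=i$ satisfy $d_X(u,v)>i$; the packing chromatic number $\chi_\rho(X)$ is the least such $c$. *)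

theory Defs
  imports Main "HOL-Library.Extended_Nat"
begin

definition path_adj :: "nat \<Rightarrow> nat \<Rightarrow> nat \<Rightarrow> bool" where
  "path_adj k i j \<longleftrightarrow> i < k \<and> j < k \<and> (j = Suc i \<or> i = Suc j)"

text \<open>Generalized Sierpinski graph S^n_G for G on [k]; words u_1...u_n are lists
  indexed 0..n-1.\<close>
definition sierp_verts :: "nat \<Rightarrow> nat \<Rightarrow> nat list set" where
  "sierp_verts k n = {u. length u = n \<and> set u \<subseteq> {0..<k}}"

definition sierp_adj :: "(nat \<Rightarrow> nat \<Rightarrow> bool) \<Rightarrow> nat \<Rightarrow> nat \<Rightarrow> nat list \<Rightarrow> nat list \<Rightarrow> bool" where
  "sierp_adj G k n u v \<longleftrightarrow> u \<in> sierp_verts k n \<and> v \<in> sierp_verts k n \<and>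
     (\<exists>i<n. (\<forall>j<i. u ! j = v ! j) \<and> u ! i \<noteq> v ! i \<and> G (u ! i) (v ! i) \<and>
        (\<forall>j. i < j \<and> j < n \<longrightarrow> u ! j = v ! i \<and> v ! j = u ! i))"

definition walk_of_len :: "'a set \<Rightarrow> ('a \<Rightarrow> 'a \<Rightarrow> bool) \<Rightarrow> 'a \<Rightarrow> 'a \<Rightarrow> nat \<Rightarrow> bool" where
  "walk_of_len V E u v m \<longleftrightarrow> (\<exists>p. length p = Suc m \<and> p ! 0 = u \<and> p ! m = v \<and>
     set p \<subseteq> V \<and> (\<forall>i<m. E (p ! i) (p ! Suc i)))"

definition graph_dist :: "'a set \<Rightarrow> ('a \<Rightarrow> 'a \<Rightarrow> bool) \<Rightarrow> 'a \<Rightarrow> 'a \<Rightarrow> enat" where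
  "graph_dist V E u v = (if \<exists>m. walk_of_len V E u v m
      then enat (LEAST m. walk_of_len V E u v m) else \<infinity>)"

definition packing_coloring :: "'a set \<Rightarrow> ('a \<Rightarrow> 'a \<Rightarrow> bool) \<Rightarrow> nat \<Rightarrow> ('a \<Rightarrow> nat) \<Rightarrow> bool" where
  "packing_coloring V E c f \<longleftrightarrow> (\<forall>u\<in>V. f u \<in> {1..c}) \<and>
     (\<forall>u\<in>V. \<forall>v\<in>V. u \<noteq> v \<and> f u = f v \<longrightarrow> graph_dist V E u v > enat (f u))"

definition packing_chromatic_number :: "'a set \<Rightarrow> ('a \<Rightarrow> 'a \<Rightarrow> bool) \<Rightarrow> nat" where
  "packing_chromatic_number V E = (LEAST c. \<exists>f. packing_coloring V E c f)"

end

theory Submission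
  imports Defs
begin

definition adjx :: "nat list \<Rightarrow> nat list \<Rightarrow> bool" where
  "adjx u v = (length v = length u \<and> list_ex (\<lambda>i. take i u = take i v \<and> u!i \<noteq> v!i \<and>
     (u!i = Suc (v!i) \<or> v!i = Suc (u!i)) \<and>
     list_all (\<lambda>j. u!j = v!i \<and> v!j = u!i) [Suc i..<length u]) [0..<length u])"

definition wordok :: "nat \<Rightarrow> nat list \<Rightarrow> bool" where
  "wordok n u = (length u = n \<and> list_all (\<lambda>x. x < 4) u)"

fun chain :: "nat list list \<Rightarrow> bool" where
  "chain (x # y # r) = (adjx x y \<and> chain (y # r))"
| "chain _ = True"

definition cert_ok :: "nat \<Rightarrow> nat list list \<Rightarrow> (nat \<times> nat \<times> nat list list) list \<Rightarrow> bool" where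
  "cert_ok n vs cert = list_all (\<lambda>(i,j,pa). i < j \<and> j < length vs \<and> pa \<noteq> [] \<and> hd pa = vs!i \<and>
     last pa = vs!j \<and> list_all (wordok n) pa \<and> chain pa) cert"

definition mkcons :: "(nat \<times> nat \<times> nat list list) list \<Rightarrow> nat \<Rightarrow> (nat \<times> nat) list list" where
  "mkcons cert N = map (\<lambda>j. map (\<lambda>(i,j',pa). (i, length pa - 1)) (filter (\<lambda>(i,j',pa). j' = j) cert)) [0..<N]"

definition compat :: "(nat \<times> nat) list list \<Rightarrow> nat list \<Rightarrow> nat \<Rightarrow> bool" where
  "compat cons pre a = list_all (\<lambda>(i,d). i < length pre \<longrightarrow> pre!i \<noteq> a \<or> a < d) (cons ! length pre)"

fun srch :: "nat \<Rightarrow> (nat \<times> nat) list list \<Rightarrow> nat list \<Rightarrow> nat \<Rightarrow> bool" where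
  "srch c cons pre 0 = True"
| "srch c cons pre (Suc m) = list_ex (\<lambda>a. compat cons pre a \<and> srch c cons (pre @ [a]) m) [1..<Suc c]"

definition vsA :: "nat list list" where "vsA = [[2,2],[2,3],[2,1],[2,0],[1,2],[3,2],[3,1],[3,3],[1,3],[3,0]]"
definition certA :: "(nat \<times> nat \<times> nat list list) list" where "certA = [(0,1,[[2,2],[2,3]]),
  (0,2,[[2,2],[2,1]]),
  (1,2,[[2,3],[2,2],[2,1]]),
  (0,3,[[2,2],[2,1],[2,0]]),
  (1,3,[[2,3],[2,2],[2,1],[2,0]]),
  (2,3,[[2,1],[2,0]]),
  (0,4,[[2,2],[2,1],[1,2]]),
  (1,4,[[2,3],[2,2],[2,1],[1,2]]),
  (2,4,[[2,1],[1,2]]),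
  (3,4,[[2,0],[2,1],[1,2]]),
  (0,5,[[2,2],[2,3],[3,2]]),
  (1,5,[[2,3],[3,2]]),
  (2,5,[[2,1],[2,2],[2,3],[3,2]]),
  (0,6,[[2,2],[2,3],[3,2],[3,1]]),
  (1,6,[[2,3],[3,2],[3,1]]),
  (5,6,[[3,2],[3,1]]),
  (0,7,[[2,2],[2,3],[3,2],[3,3]]),
  (1,7,[[2,3],[3,2],[3,3]]),
  (5,7,[[3,2],[3,3]]),
  (6,7,[[3,1],[3,2],[3,3]]),
  (0,8,[[2,2],[2,1],[1,2],[1,3]]),
  (2,8,[[2,1],[1,2],[1,3]]),
  (3,8,[[2,0],[2,1],[1,2],[1,3]]),
  (4,8,[[1,2],[1,3]]),
  (1,9,[[2,3],[3,2],[3,1],[3,0]]),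
  (5,9,[[3,2],[3,1],[3,0]]),
  (6,9,[[3,1],[3,0]]),
  (7,9,[[3,3],[3,2],[3,1],[3,0]])]"
definition vsB :: "nat list list" where "vsB = [[1,1,2],[1,1,1],[1,1,3],[1,2,1],[1,2,0],[1,2,2],[1,2,3],[2,1,1],[2,1,2],[2,1,0],[1,3,2],[2,1,3],[2,2,1],[2,0,1],[1,3,1],[1,3,3],[2,2,2],[2,2,0],[2,0,0],[2,0,2]]"
definition certB :: "(nat \<times> nat \<times> nat list list) list" where "certB = [(0,1,[[1,1,2],[1,1,1]]),
  (0,2,[[1,1,2],[1,1,3]]),
  (1,2,[[1,1,1],[1,1,2],[1,1,3]]),
  (0,3,[[1,1,2],[1,2,1]]),
  (1,3,[[1,1,1],[1,1,2],[1,2,1]]),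
  (2,3,[[1,1,3],[1,1,2],[1,2,1]]),
  (0,4,[[1,1,2],[1,2,1],[1,2,0]]),
  (1,4,[[1,1,1],[1,1,2],[1,2,1],[1,2,0]]),
  (2,4,[[1,1,3],[1,1,2],[1,2,1],[1,2,0]]),
  (3,4,[[1,2,1],[1,2,0]]),
  (0,5,[[1,1,2],[1,2,1],[1,2,2]]),
  (1,5,[[1,1,1],[1,1,2],[1,2,1],[1,2,2]]),
  (2,5,[[1,1,3],[1,1,2],[1,2,1],[1,2,2]]),
  (3,5,[[1,2,1],[1,2,2]]),
  (4,5,[[1,2,0],[1,2,1],[1,2,2]]),
  (0,6,[[1,1,2],[1,2,1],[1,2,2],[1,2,3]]),
  (1,6,[[1,1,1],[1,1,2],[1,2,1],[1,2,2],[1,2,3]]),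
  (2,6,[[1,1,3],[1,1,2],[1,2,1],[1,2,2],[1,2,3]]),
  (3,6,[[1,2,1],[1,2,2],[1,2,3]]),
  (4,6,[[1,2,0],[1,2,1],[1,2,2],[1,2,3]]),
  (5,6,[[1,2,2],[1,2,3]]),
  (0,7,[[1,1,2],[1,2,1],[1,2,2],[2,1,1]]),
  (1,7,[[1,1,1],[1,1,2],[1,2,1],[1,2,2],[2,1,1]]),
  (2,7,[[1,1,3],[1,1,2],[1,2,1],[1,2,2],[2,1,1]]),
  (3,7,[[1,2,1],[1,2,2],[2,1,1]]),
  (4,7,[[1,2,0],[1,2,1],[1,2,2],[2,1,1]]),
  (5,7,[[1,2,2],[2,1,1]]),
  (6,7,[[1,2,3],[1,2,2],[2,1,1]]),
  (0,8,[[1,1,2],[1,2,1],[1,2,2],[2,1,1],[2,1,2]]),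
  (3,8,[[1,2,1],[1,2,2],[2,1,1],[2,1,2]]),
  (4,8,[[1,2,0],[1,2,1],[1,2,2],[2,1,1],[2,1,2]]),
  (5,8,[[1,2,2],[2,1,1],[2,1,2]]),
  (6,8,[[1,2,3],[1,2,2],[2,1,1],[2,1,2]]),
  (7,8,[[2,1,1],[2,1,2]]),
  (0,9,[[1,1,2],[1,2,1],[1,2,2],[2,1,1],[2,1,0]]),
  (3,9,[[1,2,1],[1,2,2],[2,1,1],[2,1,0]]),
  (4,9,[[1,2,0],[1,2,1],[1,2,2],[2,1,1],[2,1,0]]),
  (5,9,[[1,2,2],[2,1,1],[2,1,0]]),
  (6,9,[[1,2,3],[1,2,2],[2,1,1],[2,1,0]]),
  (7,9,[[2,1,1],[2,1,0]]),
  (8,9,[[2,1,2],[2,1,1],[2,1,0]]),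
  (0,10,[[1,1,2],[1,2,1],[1,2,2],[1,2,3],[1,3,2]]),
  (3,10,[[1,2,1],[1,2,2],[1,2,3],[1,3,2]]),
  (4,10,[[1,2,0],[1,2,1],[1,2,2],[1,2,3],[1,3,2]]),
  (5,10,[[1,2,2],[1,2,3],[1,3,2]]),
  (6,10,[[1,2,3],[1,3,2]]),
  (7,10,[[2,1,1],[1,2,2],[1,2,3],[1,3,2]]),
  (8,10,[[2,1,2],[2,1,1],[1,2,2],[1,2,3],[1,3,2]]),
  (9,10,[[2,1,0],[2,1,1],[1,2,2],[1,2,3],[1,3,2]]),
  (3,11,[[1,2,1],[1,2,2],[2,1,1],[2,1,2],[2,1,3]]),
  (5,11,[[1,2,2],[2,1,1],[2,1,2],[2,1,3]]),
  (6,11,[[1,2,3],[1,2,2],[2,1,1],[2,1,2],[2,1,3]]),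
  (7,11,[[2,1,1],[2,1,2],[2,1,3]]),
  (8,11,[[2,1,2],[2,1,3]]),
  (9,11,[[2,1,0],[2,1,1],[2,1,2],[2,1,3]]),
  (3,12,[[1,2,1],[1,2,2],[2,1,1],[2,1,2],[2,2,1]]),
  (5,12,[[1,2,2],[2,1,1],[2,1,2],[2,2,1]]),
  (6,12,[[1,2,3],[1,2,2],[2,1,1],[2,1,2],[2,2,1]]),
  (7,12,[[2,1,1],[2,1,2],[2,2,1]]),
  (8,12,[[2,1,2],[2,2,1]]),
  (9,12,[[2,1,0],[2,1,1],[2,1,2],[2,2,1]]),
  (11,12,[[2,1,3],[2,1,2],[2,2,1]]),
  (3,13,[[1,2,1],[1,2,2],[2,1,1],[2,1,0],[2,0,1]]),
  (5,13,[[1,2,2],[2,1,1],[2,1,0],[2,0,1]]),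
  (6,13,[[1,2,3],[1,2,2],[2,1,1],[2,1,0],[2,0,1]]),
  (7,13,[[2,1,1],[2,1,0],[2,0,1]]),
  (8,13,[[2,1,2],[2,1,1],[2,1,0],[2,0,1]]),
  (9,13,[[2,1,0],[2,0,1]]),
  (11,13,[[2,1,3],[2,1,2],[2,1,1],[2,1,0],[2,0,1]]),
  (12,13,[[2,2,1],[2,1,2],[2,1,1],[2,1,0],[2,0,1]]),
  (3,14,[[1,2,1],[1,2,2],[1,2,3],[1,3,2],[1,3,1]]),
  (5,14,[[1,2,2],[1,2,3],[1,3,2],[1,3,1]]),
  (6,14,[[1,2,3],[1,3,2],[1,3,1]]),
  (7,14,[[2,1,1],[1,2,2],[1,2,3],[1,3,2],[1,3,1]]),
  (10,14,[[1,3,2],[1,3,1]]),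
  (3,15,[[1,2,1],[1,2,2],[1,2,3],[1,3,2],[1,3,3]]),
  (5,15,[[1,2,2],[1,2,3],[1,3,2],[1,3,3]]),
  (6,15,[[1,2,3],[1,3,2],[1,3,3]]),
  (7,15,[[2,1,1],[1,2,2],[1,2,3],[1,3,2],[1,3,3]]),
  (10,15,[[1,3,2],[1,3,3]]),
  (14,15,[[1,3,1],[1,3,2],[1,3,3]]),
  (5,16,[[1,2,2],[2,1,1],[2,1,2],[2,2,1],[2,2,2]]),
  (7,16,[[2,1,1],[2,1,2],[2,2,1],[2,2,2]]),
  (8,16,[[2,1,2],[2,2,1],[2,2,2]]),
  (9,16,[[2,1,0],[2,1,1],[2,1,2],[2,2,1],[2,2,2]]),
  (11,16,[[2,1,3],[2,1,2],[2,2,1],[2,2,2]]),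
  (12,16,[[2,2,1],[2,2,2]]),
  (5,17,[[1,2,2],[2,1,1],[2,1,2],[2,2,1],[2,2,0]]),
  (7,17,[[2,1,1],[2,1,2],[2,2,1],[2,2,0]]),
  (8,17,[[2,1,2],[2,2,1],[2,2,0]]),
  (9,17,[[2,1,0],[2,1,1],[2,1,2],[2,2,1],[2,2,0]]),
  (11,17,[[2,1,3],[2,1,2],[2,2,1],[2,2,0]]),
  (12,17,[[2,2,1],[2,2,0]]),
  (16,17,[[2,2,2],[2,2,1],[2,2,0]]),
  (5,18,[[1,2,2],[2,1,1],[2,1,0],[2,0,1],[2,0,0]]),
  (7,18,[[2,1,1],[2,1,0],[2,0,1],[2,0,0]]),
  (8,18,[[2,1,2],[2,1,1],[2,1,0],[2,0,1],[2,0,0]]),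
  (9,18,[[2,1,0],[2,0,1],[2,0,0]]),
  (13,18,[[2,0,1],[2,0,0]]),
  (5,19,[[1,2,2],[2,1,1],[2,1,0],[2,0,1],[2,0,2]]),
  (7,19,[[2,1,1],[2,1,0],[2,0,1],[2,0,2]]),
  (8,19,[[2,1,2],[2,1,1],[2,1,0],[2,0,1],[2,0,2]]),
  (9,19,[[2,1,0],[2,0,1],[2,0,2]]),
  (13,19,[[2,0,1],[2,0,2]]),
  (18,19,[[2,0,0],[2,0,1],[2,0,2]])]"


lemma chain_nth: "chain pa \<Longrightarrow> i < length pa - 1 \<Longrightarrow> adjx (pa!i) (pa!Suc i)"
proof (induction pa arbitrary: i rule: chain.induct)
  case (1 x y r)
  then show ?case by (cases i) auto
qed auto

lemma verts_emb:
  assumes "wordok n u" "4 \<le> k" "set p \<subseteq> {0..<k}"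
  shows "p @ u \<in> sierp_verts k (length p + n)"
  using assms by (auto simp: sierp_verts_def wordok_def list_all_iff)

lemma adjx_emb:
  assumes a: "adjx u v" and wu: "wordok n u" and wv: "wordok n v" and k: "4 \<le> k"
    and p: "set p \<subseteq> {0..<k}"
  shows "sierp_adj (path_adj k) k (length p + n) (p@u) (p@v)"
proof -
  have lu: "length u = n" and lv: "length v = n" using wu wv by (auto simp: wordok_def)
  have bu: "u!x < k" if "x < n" for x
  proof -
    have "u!x \<in> set u" using that lu by simp
    then show ?thesis using wu k by (auto simp: wordok_def list_all_iff)
  qed
  have bv: "v!x < k" if "x < n" for x
  proof -
    have "v!x \<in> set v" using that lv by simp
    then show ?thesis using wv k by (auto simp: wordok_def list_all_iff)
  qed
  from a obtain i where i: "i < n" "take i u = take i v" "u!i \<noteq> v!i"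
    "u!i = Suc (v!i) \<or> v!i = Suc (u!i)" "\<forall>j\<in>set [Suc i..<n]. u!j = v!i \<and> v!j = u!i"
    unfolding adjx_def list_ex_iff list_all_iff using lu by auto
  let ?L = "length p"
  show ?thesis unfolding sierp_adj_def
  proof (intro conjI exI[of _ "?L + i"])
    show "p @ u \<in> sierp_verts k (?L + n)" by (rule verts_emb[OF wu k p])
    show "p @ v \<in> sierp_verts k (?L + n)" by (rule verts_emb[OF wv k p])
    show "?L + i < ?L + n" using i by simp
    show "\<forall>j<?L + i. (p @ u) ! j = (p @ v) ! j"
    proof (intro allI impI)
      fix j assume j: "j < ?L + i"
      show "(p @ u) ! j = (p @ v) ! j"
      proof (cases "j < ?L")
        case True then show ?thesis by (simp add: nth_append)
      next
        case False
        then have "j - ?L < i" using j by simp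
        then have "u ! (j - ?L) = v ! (j - ?L)" using i(2)
          by (metis nth_take)
        then show ?thesis using False by (simp add: nth_append)
      qed
    qed
    show "(p @ u) ! (?L + i) \<noteq> (p @ v) ! (?L + i)" using i by (simp add: nth_append)
    show "path_adj k ((p @ u) ! (?L + i)) ((p @ v) ! (?L + i))"
      using i bu bv by (auto simp: nth_append path_adj_def)
    show "\<forall>j. ?L + i < j \<and> j < ?L + n \<longrightarrow>
        (p @ u) ! j = (p @ v) ! (?L + i) \<and> (p @ v) ! j = (p @ u) ! (?L + i)"
    proof (intro allI impI)
      fix j assume j: "?L + i < j \<and> j < ?L + n"
      then have "j - ?L \<in> set [Suc i..<n]" by auto
      then show "(p @ u) ! j = (p @ v) ! (?L + i) \<and> (p @ v) ! j = (p @ u) ! (?L + i)"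
        using i(5) j by (simp add: nth_append)
    qed
  qed
qed

lemma walk_path:
  assumes "pa \<noteq> []" "chain pa" "list_all (wordok n) pa" "4 \<le> k" "set p \<subseteq> {0..<k}"
  shows "walk_of_len (sierp_verts k (length p + n)) (sierp_adj (path_adj k) k (length p + n))
           (p @ hd pa) (p @ last pa) (length pa - 1)"
  unfolding walk_of_len_def
proof (intro exI[of _ "map ((@) p) pa"] conjI)
  show "length (map ((@) p) pa) = Suc (length pa - 1)" using assms(1) by simp
  show "map ((@) p) pa ! 0 = p @ hd pa" using assms(1) by (simp add: hd_conv_nth)
  show "map ((@) p) pa ! (length pa - 1) = p @ last pa" using assms(1) by (simp add: last_conv_nth)
  show "set (map ((@) p) pa) \<subseteq> sierp_verts k (length p + n)"
    using assms verts_emb by (auto simp: list_all_iff)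
  show "\<forall>i<length pa - 1. sierp_adj (path_adj k) k (length p + n) (map ((@) p) pa ! i) (map ((@) p) pa ! Suc i)"
  proof (intro allI impI)
    fix i assume i: "i < length pa - 1"
    have w1: "wordok n (pa!i)" and w2: "wordok n (pa ! Suc i)" using assms(3) i
      by (auto simp: list_all_iff)
    show "sierp_adj (path_adj k) k (length p + n) (map ((@) p) pa ! i) (map ((@) p) pa ! Suc i)"
      using adjx_emb[OF chain_nth[OF assms(2) i] w1 w2 assms(4,5)] i by simp
  qed
qed

lemma dist_le: "walk_of_len V E u v m \<Longrightarrow> graph_dist V E u v \<le> enat m"
  unfolding graph_dist_def by (auto intro: Least_le)

lemma srch_complete:
  assumes "length cs = length pre + m" "take (length pre) cs = pre" "\<forall>x\<in>set cs. x \<in> {1..c}"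
    "\<forall>j<length cs. \<forall>(i,d)\<in>set (cons!j). i < j \<longrightarrow> \<not> (cs!i = cs!j \<and> d \<le> cs!j)"
  shows "srch c cons pre m"
  using assms
proof (induction m arbitrary: pre)
  case 0 then show ?case by simp
next
  case (Suc m)
  let ?a = "cs ! length pre"
  have lt: "length pre < length cs" using Suc.prems(1) by simp
  have "?a \<in> set cs" using lt by simp
  then have "?a \<in> {1..c}" using Suc.prems(3) by blast
  then have a: "?a \<in> set [1..<Suc c]" by auto
  have tk: "take (length (pre @ [?a])) cs = pre @ [?a]"
    using Suc.prems(2) lt by (simp add: take_Suc_conv_app_nth)
  have pi: "\<And>i. i < length pre \<Longrightarrow> pre ! i = cs ! i"
    using Suc.prems(2) by (metis nth_take)
  have c: "compat cons pre ?a"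
    unfolding compat_def list_all_iff
  proof (intro ballI)
    fix x assume x: "x \<in> set (cons ! length pre)"
    obtain i d where xid: "x = (i,d)" by force
    show "case x of (i, d) \<Rightarrow> i < length pre \<longrightarrow> pre ! i \<noteq> ?a \<or> ?a < d"
      using Suc.prems(4) lt x pi unfolding xid by fastforce
  qed
  have "srch c cons (pre @ [?a]) m"
    using Suc.IH[of "pre @ [?a]"] Suc.prems tk by simp
  then show ?case using a c by (auto simp: list_ex_iff)
qed

lemma no_coloring:
  assumes k: "4 \<le> k" and p: "set p \<subseteq> {0..<k}" and N: "N = length p + n"
    and dv: "distinct vs" and wv: "list_all (wordok n) vs" and co: "cert_ok n vs cert"
    and ns: "\<not> srch c (mkcons cert (length vs)) [] (length vs)"
    and pc: "packing_coloring (sierp_verts k N) (sierp_adj (path_adj k) k N) c' f" and cc: "c' \<le> c"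
  shows False
proof -
  let ?V = "sierp_verts k N" and ?E = "sierp_adj (path_adj k) k N"
  define cs where "cs = map (\<lambda>u. f (p @ u)) vs"
  have inV: "\<And>u. u \<in> set vs \<Longrightarrow> p @ u \<in> ?V"
    using wv verts_emb[OF _ k p] N by (auto simp: list_all_iff)
  have "srch c (mkcons cert (length vs)) [] (length vs)"
  proof (rule srch_complete[of cs])
    show "length cs = length [] + length vs" by (simp add: cs_def)
    show "take (length []) cs = []" by simp
    show "\<forall>x\<in>set cs. x \<in> {1..c}"
      using pc cc inV unfolding packing_coloring_def cs_def by fastforce
    show "\<forall>j<length cs. \<forall>(i, d)\<in>set (mkcons cert (length vs) ! j). i < j \<longrightarrow> \<not> (cs ! i = cs ! j \<and> d \<le> cs ! j)"
    proof (intro allI impI ballI)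
      fix j x assume j: "j < length cs" and x: "x \<in> set (mkcons cert (length vs) ! j)"
      have jl: "j < length vs" using j by (simp add: cs_def)
      from x jl obtain i j' pa where e: "(i,j',pa) \<in> set cert" "j' = j" "x = (i, length pa - 1)"
        by (auto simp: mkcons_def)
      have ok: "i < j" "pa \<noteq> []" "hd pa = vs!i" "last pa = vs!j" "list_all (wordok n) pa" "chain pa"
        using co e unfolding cert_ok_def list_all_iff by fastforce+
      have il: "i < length vs" using ok(1) jl by simp
      have w: "walk_of_len ?V ?E (p @ vs!i) (p @ vs!j) (length pa - 1)"
        using walk_path[OF ok(2) ok(6) ok(5) k p] ok(3,4) N by simp
      have dl: "graph_dist ?V ?E (p @ vs!i) (p @ vs!j) \<le> enat (length pa - 1)"
        by (rule dist_le[OF w])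
      have ne: "p @ vs!i \<noteq> p @ vs!j" using dv il jl ok(1) by (simp add: nth_eq_iff_index_eq)
      have mi: "p @ vs!i \<in> ?V" "p @ vs!j \<in> ?V" using inV il jl by auto
      show "case x of (i, d) \<Rightarrow> i < j \<longrightarrow> \<not> (cs ! i = cs ! j \<and> d \<le> cs ! j)"
      proof -
       have "\<not> (cs ! i = cs ! j \<and> length pa - 1 \<le> cs ! j)"
       proof
        assume h: "cs ! i = cs ! j \<and> length pa - 1 \<le> cs ! j"
        then have "f (p @ vs!i) = f (p @ vs!j)" using il jl by (simp add: cs_def)
        then have "graph_dist ?V ?E (p @ vs!i) (p @ vs!j) > enat (f (p @ vs!i))"
          using pc ne mi unfolding packing_coloring_def by blast
        moreover have "enat (length pa - 1) \<le> enat (f (p @ vs!i))" using h il jl by (simp add: cs_def)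
        ultimately show False using dl by (meson not_le order_trans)
       qed
       then show ?thesis using e(3) by simp
      qed
    qed
  qed
  then show False using ns by simp
qed

lemma dataA1: "\<not> srch 3 (mkcons certA (length vsA)) [] (length vsA)"
  by code_simp

lemma dataA2: "cert_ok 2 vsA certA \<and> distinct vsA \<and> list_all (wordok 2) vsA"
  by code_simp

lemma dataB1: "\<not> srch 4 (mkcons certB (length vsB)) [] (length vsB)"
  by code_simp

lemma dataB2: "cert_ok 3 vsB certB \<and> distinct vsB \<and> list_all (wordok 3) vsB"
  by code_simp

lemma exists_col: "\<exists>c f. packing_coloring (sierp_verts k n) E c f"
proof -
  have "finite (sierp_verts k n)"
    using finite_lists_length_eq[of "{0..<k}" n] unfolding sierp_verts_def
    by (simp add: conj_commute)
  then obtain g m where g: "g ` sierp_verts k n = {i::nat. i < m}" "inj_on g (sierp_verts k n)"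
    using finite_imp_inj_to_nat_seg by blast
  have "packing_coloring (sierp_verts k n) E m (\<lambda>u. Suc (g u))"
    unfolding packing_coloring_def
  proof (intro conjI ballI impI)
    fix u assume "u \<in> sierp_verts k n"
    then have "g u < m" using g(1) by blast
    then show "Suc (g u) \<in> {1..m}" by simp
  next
    fix u v assume "u \<in> sierp_verts k n" "v \<in> sierp_verts k n" "u \<noteq> v \<and> Suc (g u) = Suc (g v)"
    then have False using g(2) by (auto dest: inj_onD)
    then show "enat (Suc (g u)) < graph_dist (sierp_verts k n) E u v" by blast
  qed
  then show ?thesis by blast
qed

lemma least_ge:
  assumes "\<exists>c f. packing_coloring V E c f"
    and "\<And>c f. packing_coloring V E c f \<Longrightarrow> c < b \<Longrightarrow> False"
  shows "b \<le> packing_chromatic_number V E"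
proof -
  from assms(1) obtain c0 where "\<exists>f. packing_coloring V E c0 f" by blast
  then have "\<exists>f. packing_coloring V E (LEAST c. \<exists>f. packing_coloring V E c f) f"
    by (rule LeastI)
  then obtain f where "packing_coloring V E (packing_chromatic_number V E) f"
    unfolding packing_chromatic_number_def by blast
  then show ?thesis using assms(2) by (meson not_le)
qed

theorem proposition2:
  fixes n k :: nat
  assumes "k \<ge> 4" and "n \<ge> 3"
  shows "packing_chromatic_number (sierp_verts k 2) (sierp_adj (path_adj k) k 2) \<ge> 4 \<and>
         packing_chromatic_number (sierp_verts k n) (sierp_adj (path_adj k) k n) \<ge> 5"
proof
  show "packing_chromatic_number (sierp_verts k 2) (sierp_adj (path_adj k) k 2) \<ge> 4"
  proof (rule least_ge[OF exists_col])
    fix c f assume pc: "packing_coloring (sierp_verts k 2) (sierp_adj (path_adj k) k 2) c f" and "c < 4"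
    then have cc: "c \<le> 3" by simp
    show False
      by (rule no_coloring[of k "[]" 2 2 vsA certA 3 c f])
         (use assms(1) dataA1 dataA2 pc cc in auto)
  qed
  show "packing_chromatic_number (sierp_verts k n) (sierp_adj (path_adj k) k n) \<ge> 5"
  proof (rule least_ge[OF exists_col])
    fix c f assume pc: "packing_coloring (sierp_verts k n) (sierp_adj (path_adj k) k n) c f" and "c < 5"
    then have cc: "c \<le> 4" by simp
    have p: "set (replicate (n-3) (0::nat)) \<subseteq> {0..<k}" using assms(1) by auto
    have N: "n = length (replicate (n-3) (0::nat)) + 3" using assms(2) by simp
    show False
      by (rule no_coloring[OF assms(1) p N _ _ _ dataB1 pc cc]) (use dataB2 in auto)
  qed
qed

end
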